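(* Let $f$ be an $n$-variable Boolean function with $f\neq\delta_0$ and $f^c\neq\delta_0$. Then $|{FAI}(f^c)-{FAI}(f)|\le 2$.
   Context: An $n$-variable Boolean function is a map $\mathbb{F}_2^n\to\mathbb{F}_2$, with algebraic degree $\deg$ the degree of its algebraic normal form (ANF). $\delta_0$ is the indicator function of $\{0\}\subseteq\mathbb{F}_2^n$. The algebraic complement $f^c$ of $f$ is the function whose ANF consists of exactly the monomials $\prod_{i\in I}x_i$, $I\subseteq\{1,\dots,n\}$, that do not appear in the ANF of $f$; equivalently $f^c=f+\delta_0$. ${AN}^c(f)$ is the set of $g$ with $f\cdot g\neq0$, and ${FAI}(f)$ is the minimum of $\deg(g)+\deg(f\cdot g)$ over $g\in{AN}^c(f)$, $g\neq 1$. *)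

theory Defs
  imports Main
begin

text \<open>The n variables are indexed by a
  finite type 'n (so n = CARD('n)); a vector x in F_2^n is identified with its support
  x :: 'n set (the set of coordinates equal to 1), and F_2 with bool (addition = xor,
  multiplication = conjunction).\<close>

type_synonym 'n boolfun = "'n set \<Rightarrow> bool"

text \<open>ANF coefficient of the monomial prod_{i in I} x_i: a_I = sum_{J subseteq I} f(J) (mod 2).\<close>
definition anf :: "('n::finite) boolfun \<Rightarrow> 'n set \<Rightarrow> bool" where
  "anf f I = odd (card {J. J \<subseteq> I \<and> f J})"

text \<open>Evaluation of the polynomial whose ANF has exactly the monomials in the set A.\<close>
definition anf_eval :: "('n::finite) set set \<Rightarrow> 'n boolfun" where
  "anf_eval A x = odd (card {I \<in> A. I \<subseteq> x})"

definition alg_deg :: "('n::finite) boolfun \<Rightarrow> nat" where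
  "alg_deg f = Max (insert 0 {card I | I. anf f I})"

definition delta0 :: "('n::finite) boolfun" where
  "delta0 x = (x = {})"

definition alg_compl :: "('n::finite) boolfun \<Rightarrow> 'n boolfun" where
  "alg_compl f = anf_eval {I. \<not> anf f I}"

definition bf_mult :: "('n::finite) boolfun \<Rightarrow> 'n boolfun \<Rightarrow> 'n boolfun" where
  "bf_mult f g = (\<lambda>x. f x \<and> g x)"

definition ANc :: "('n::finite) boolfun \<Rightarrow> 'n boolfun set" where
  "ANc f = {g. bf_mult f g \<noteq> (\<lambda>x. False)}"

definition FAI :: "('n::finite) boolfun \<Rightarrow> nat" where
  "FAI f = Min {alg_deg g + alg_deg (bf_mult f g) | g. g \<in> ANc f \<and> g \<noteq> (\<lambda>x. True)}"

end

theory Submission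
  imports Defs
begin

lemma parity_sum:
  fixes a :: "'a \<Rightarrow> nat"
  assumes "finite S"
  shows "even (\<Sum>i\<in>S. a i) \<longleftrightarrow> even (card {i\<in>S. odd (a i)})"
  using assms
proof (induction S rule: finite_induct)
  case empty
  then show ?case by simp
next
  case (insert x F)
  have e: "{i \<in> insert x F. odd (a i)} = (if odd (a x) then insert x {i\<in>F. odd (a i)} else {i\<in>F. odd (a i)})"
    by auto
  show ?case apply (subst e) using insert by auto
qed

lemma card_interval_pow:
  assumes "J \<subseteq> x" "finite x"
  shows "card {I. J \<subseteq> I \<and> I \<subseteq> x} = 2 ^ card (x - J)"
proof -
  have "bij_betw (\<lambda>I. I - J) {I. J \<subseteq> I \<and> I \<subseteq> x} (Pow (x - J))"
    by (rule bij_betw_byWitness[where f' = "\<lambda>K. K \<union> J"]) (use assms in auto)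
  then have "card {I. J \<subseteq> I \<and> I \<subseteq> x} = card (Pow (x - J))"
    by (rule bij_betw_same_card)
  also have "\<dots> = 2 ^ card (x - J)" using assms by (simp add: card_Pow)
  finally show ?thesis .
qed

lemma moebius:
  fixes f :: "('n::finite) boolfun"
  shows "odd (card {I. I \<subseteq> x \<and> anf f I}) = f x"
proof -
  define c where "c I = card {J. J \<subseteq> I \<and> f J}" for I
  have "{I. I \<subseteq> x \<and> anf f I} = {I \<in> Pow x. odd (c I)}"
    unfolding anf_def c_def by auto
  then have 1: "even (card {I. I \<subseteq> x \<and> anf f I}) = even (\<Sum>I\<in>Pow x. c I)"
    using parity_sum[of "Pow x" c] by simp
  have 2: "c I = (\<Sum>J\<in>Pow x. if J \<subseteq> I \<and> f J then 1 else 0)" if "I \<subseteq> x" for I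
  proof -
    have "{J. J \<subseteq> I \<and> f J} = {J \<in> Pow x. J \<subseteq> I \<and> f J}" using that by auto
    then show ?thesis unfolding c_def by (simp add: sum.inter_filter[symmetric])
  qed
  have "(\<Sum>I\<in>Pow x. c I) = (\<Sum>I\<in>Pow x. \<Sum>J\<in>Pow x. if J \<subseteq> I \<and> f J then 1 else 0)"
    using 2 by (intro sum.cong) auto
  also have "\<dots> = (\<Sum>J\<in>Pow x. \<Sum>I\<in>Pow x. if J \<subseteq> I \<and> f J then 1 else 0)"
    by (rule sum.swap)
  also have "\<dots> = (\<Sum>J\<in>Pow x. if f J then 2 ^ card (x - J) else 0)"
  proof (intro sum.cong refl)
    fix J assume J: "J \<in> Pow x"
    have "(\<Sum>I\<in>Pow x. if J \<subseteq> I \<and> f J then 1 else (0::nat)) = (if f J then card {I \<in> Pow x. J \<subseteq> I} else 0)"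
      by (simp add: sum.inter_filter[symmetric])
    also have "{I \<in> Pow x. J \<subseteq> I} = {I. J \<subseteq> I \<and> I \<subseteq> x}" by auto
    finally show "(\<Sum>I\<in>Pow x. if J \<subseteq> I \<and> f J then 1 else (0::nat)) = (if f J then 2 ^ card (x - J) else 0)"
      using card_interval_pow[of J x] J by simp
  qed
  finally have 3: "even (card {I. I \<subseteq> x \<and> anf f I}) = even (\<Sum>J\<in>Pow x. if f J then 2 ^ card (x - J) else (0::nat))"
    using 1 by simp
  have 4: "{J \<in> Pow x. odd (if f J then 2 ^ card (x - J) else (0::nat))} = (if f x then {x} else {})"
  proof -
    have h: "odd (if f J then 2 ^ card (x - J) else (0::nat)) \<longleftrightarrow> f J \<and> J = x" if "J \<subseteq> x" for J
    proof -
      have "card (x - J) = 0 \<longleftrightarrow> J = x" using that by auto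
      then show ?thesis by auto
    qed
    have "{J \<in> Pow x. odd (if f J then 2 ^ card (x - J) else (0::nat))} = {J \<in> Pow x. f J \<and> J = x}"
    proof (rule Collect_cong)
      fix J show "(J \<in> Pow x \<and> odd (if f J then 2 ^ card (x - J) else (0::nat))) = (J \<in> Pow x \<and> f J \<and> J = x)"
        using h[of J] by blast
    qed
    then show ?thesis by auto
  qed
  show ?thesis using 3 parity_sum[of "Pow x" "\<lambda>J. if f J then 2 ^ card (x - J) else (0::nat)"] 4
    by simp
qed

lemma alg_compl_eq:
  fixes f :: "('n::finite) boolfun"
  shows "alg_compl f = (\<lambda>x. f x \<noteq> delta0 x)"
proof
  fix x :: "'n set"
  have u: "Pow x = {I. I \<subseteq> x \<and> anf f I} \<union> {I. I \<subseteq> x \<and> \<not> anf f I}" by auto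
  have "card (Pow x) = card {I. I \<subseteq> x \<and> anf f I} + card {I. I \<subseteq> x \<and> \<not> anf f I}"
    by (subst u, rule card_Un_disjoint) auto
  moreover have "card (Pow x) = 2 ^ card x" by (simp add: card_Pow)
  ultimately have s: "card {I. I \<subseteq> x \<and> anf f I} + card {I. I \<subseteq> x \<and> \<not> anf f I} = 2 ^ card x"
    by simp
  have m: "odd (card {I. I \<subseteq> x \<and> anf f I}) = f x" by (rule moebius)
  have o: "odd ((2::nat) ^ card x) \<longleftrightarrow> x = {}" by simp
  have "alg_compl f x = odd (card {I. I \<subseteq> x \<and> \<not> anf f I})"
    unfolding alg_compl_def anf_eval_def by (simp add: conj_commute)
  also have "\<dots> = (f x \<noteq> (x = {}))"
    using arg_cong[OF s, of odd] m o by (simp only: odd_add) blast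
  finally show "alg_compl f x = (f x \<noteq> delta0 x)" unfolding delta0_def .
qed

lemma anf_xi:
  fixes g :: "('n::finite) boolfun"
  shows "anf (\<lambda>y. i \<in> y \<and> g y) I = (i \<in> I \<and> (anf g I \<noteq> anf g (I - {i})))"
proof (cases "i \<in> I")
  case False
  then have "{J. J \<subseteq> I \<and> i \<in> J \<and> g J} = {}" by auto
  then show ?thesis using False unfolding anf_def by (simp only: card.empty) simp
next
  case True
  have u: "{J. J \<subseteq> I \<and> g J} = {J. J \<subseteq> I \<and> i \<in> J \<and> g J} \<union> {J. J \<subseteq> I - {i} \<and> g J}"
    using True by auto
  have "card {J. J \<subseteq> I \<and> g J} = card {J. J \<subseteq> I \<and> i \<in> J \<and> g J} + card {J. J \<subseteq> I - {i} \<and> g J}"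
    by (subst u, rule card_Un_disjoint) auto
  then have "odd (card {J. J \<subseteq> I \<and> g J}) = (odd (card {J. J \<subseteq> I \<and> i \<in> J \<and> g J}) \<noteq> odd (card {J. J \<subseteq> I - {i} \<and> g J}))"
    by simp
  then show ?thesis using True unfolding anf_def by auto
qed

lemma anf_le_deg:
  fixes f :: "('n::finite) boolfun"
  assumes "anf f I"
  shows "card I \<le> alg_deg f"
proof -
  have "finite {card I | I. anf f I}" by simp
  then show ?thesis unfolding alg_deg_def using assms by (intro Max_ge) auto
qed

lemma deg_le:
  fixes f :: "('n::finite) boolfun"
  assumes "\<And>I. anf f I \<Longrightarrow> card I \<le> d"
  shows "alg_deg f \<le> d"
proof -
  have "finite {card I | I. anf f I}" by simp
  then show ?thesis unfolding alg_deg_def using assms by (subst Max_le_iff) auto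
qed

lemma deg_xi:
  fixes g :: "('n::finite) boolfun"
  shows "alg_deg (\<lambda>y. i \<in> y \<and> g y) \<le> alg_deg g + 1"
proof (rule deg_le)
  fix I assume "anf (\<lambda>y. i \<in> y \<and> g y) I"
  then have i: "i \<in> I" and d: "anf g I \<or> anf g (I - {i})" by (auto simp: anf_xi)
  from d show "card I \<le> alg_deg g + 1"
  proof
    assume "anf g I" then show ?thesis using anf_le_deg[of g I] by simp
  next
    assume "anf g (I - {i})"
    then have "card (I - {i}) \<le> alg_deg g" by (rule anf_le_deg)
    moreover have "card I = card (I - {i}) + 1" using i
      using card_Suc_Diff1[of I i] by simp
    ultimately show ?thesis by simp
  qed
qed

lemma deg_const_True: "alg_deg (\<lambda>x::('n::finite) set. True) = 0"
proof -
  have "alg_deg (\<lambda>x::'n set. True) \<le> 0"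
  proof (rule deg_le)
    fix I :: "'n set" assume "anf (\<lambda>x. True) I"
    then have "odd (card (Pow I))" unfolding anf_def by (simp add: Pow_def)
    then have "I = {}" by (simp add: card_Pow)
    then show "card I \<le> 0" by simp
  qed
  then show ?thesis by simp
qed

lemma deg_le_n: "alg_deg (f :: ('n::finite) boolfun) \<le> card (UNIV :: 'n set)"
  by (rule deg_le) (simp add: card_mono)

lemma deg_delta0: "alg_deg (delta0 :: ('n::finite) boolfun) = card (UNIV :: 'n set)"
proof -
  have "anf (delta0 :: 'n boolfun) UNIV"
  proof -
    have "{J. J \<subseteq> (UNIV::'n set) \<and> delta0 J} = {{}}" by (auto simp: delta0_def)
    then show ?thesis unfolding anf_def by simp
  qed
  then have "card (UNIV :: 'n set) \<le> alg_deg (delta0 :: 'n boolfun)" by (rule anf_le_deg)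
  then show ?thesis using deg_le_n[of delta0] by (rule le_antisym[rotated])
qed

lemma FAI_le:
  fixes f g :: "('n::finite) boolfun"
  assumes "g \<in> ANc f" "g \<noteq> (\<lambda>x. True)"
  shows "FAI f \<le> alg_deg g + alg_deg (bf_mult f g)"
proof -
  have "finite {alg_deg g + alg_deg (bf_mult f g) | g. g \<in> ANc f \<and> g \<noteq> (\<lambda>x. True)}" by simp
  then show ?thesis unfolding FAI_def using assms by (intro Min_le) auto
qed

lemma FAI_attained:
  fixes f :: "('n::finite) boolfun"
  assumes "f \<noteq> (\<lambda>x. False)"
  shows "\<exists>g. g \<in> ANc f \<and> g \<noteq> (\<lambda>x. True) \<and> FAI f = alg_deg g + alg_deg (bf_mult f g)"
proof -
  obtain x0 where x0: "f x0" using assms by auto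
  define g0 where "g0 = (\<lambda>x::'n set. x = x0 \<and> x0 \<noteq> {} \<or> x = {} \<and> x0 = {})"
  have "g0 \<in> ANc f" unfolding ANc_def bf_mult_def g0_def using x0 by (auto simp: fun_eq_iff)
  moreover have "g0 \<noteq> (\<lambda>x. True)"
  proof
    assume h: "g0 = (\<lambda>x. True)"
    show False
    proof (cases "x0 = {}")
      case True
      have "(UNIV :: 'n set) \<noteq> {}" by simp
      then obtain a :: "'n set" where "a \<noteq> {}" by blast
      then show False using fun_cong[OF h, of a] True unfolding g0_def by simp
    next
      case False
      then show False using fun_cong[OF h, of "{}"] unfolding g0_def by simp
    qed
  qed
  ultimately have ne: "{alg_deg g + alg_deg (bf_mult f g) | g. g \<in> ANc f \<and> g \<noteq> (\<lambda>x. True)} \<noteq> {}"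
    by blast
  have "finite {alg_deg g + alg_deg (bf_mult f g) | g. g \<in> ANc f \<and> g \<noteq> (\<lambda>x. True)}" by simp
  from Min_in[OF this ne] show ?thesis unfolding FAI_def by blast
qed

lemma main_bound:
  fixes F H :: "('n::finite) boolfun"
  assumes HF: "H = (\<lambda>x. F x \<noteq> delta0 x)"
    and F0: "F \<noteq> (\<lambda>x. False)" and H0: "H \<noteq> (\<lambda>x. False)"
  shows "FAI H \<le> FAI F + 2"
proof -
  obtain g where g: "g \<in> ANc F" "g \<noteq> (\<lambda>x. True)"
    and gF: "FAI F = alg_deg g + alg_deg (bf_mult F g)"
    using FAI_attained[OF F0] by blast
  show ?thesis
  proof (cases "g {}")
    case False
    have "bf_mult H g = bf_mult F g"
      unfolding bf_mult_def HF delta0_def fun_eq_iff using False by auto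
    moreover have "g \<in> ANc H" using g(1) calculation unfolding ANc_def by simp
    ultimately show ?thesis using FAI_le[of g H] g(2) gF by simp
  next
    case True
    show ?thesis
    proof (cases "\<exists>x. x \<noteq> {} \<and> F x \<and> g x")
      case True
      then obtain x i where x: "F x" "g x" "i \<in> x" by blast
      define g' where "g' = (\<lambda>y. i \<in> y \<and> g y)"
      have e: "bf_mult H g' = (\<lambda>y. i \<in> y \<and> bf_mult F g y)"
        unfolding bf_mult_def HF delta0_def g'_def fun_eq_iff by auto
      have "bf_mult H g' x" unfolding e using x unfolding bf_mult_def by simp
      then have "g' \<in> ANc H" unfolding ANc_def by (auto simp: fun_eq_iff)
      moreover have "g' \<noteq> (\<lambda>x. True)" unfolding g'_def by (auto simp: fun_eq_iff)
      ultimately have "FAI H \<le> alg_deg g' + alg_deg (bf_mult H g')" by (rule FAI_le)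
      moreover have "alg_deg g' \<le> alg_deg g + 1" unfolding g'_def by (rule deg_xi)
      moreover have "alg_deg (bf_mult H g') \<le> alg_deg (bf_mult F g) + 1" unfolding e by (rule deg_xi)
      ultimately show ?thesis using gF by simp
    next
      case False
      have Fg0: "F {}"
      proof (rule ccontr)
        assume "\<not> F {}"
        have "\<forall>x. \<not> (F x \<and> g x)"
        proof
          fix y show "\<not> (F y \<and> g y)"
          proof (cases "y = {}")
            case True then show ?thesis using \<open>\<not> F {}\<close> by simp
          next
            case yne: False
            show ?thesis
            proof
              assume "F y \<and> g y"
              then have "\<exists>x. x \<noteq> {} \<and> F x \<and> g x" using yne by (intro exI[of _ y]) simp
              with False show False by (rule notE)
            qed
          qed
        qed
        then show False using g(1) unfolding ANc_def bf_mult_def fun_eq_iff by blast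
      qed
      have "bf_mult F g = delta0"
        unfolding bf_mult_def delta0_def fun_eq_iff
      proof
        fix y show "(F y \<and> g y) = (y = {})" using False Fg0 \<open>g {}\<close> by (cases "y = {}") auto
      qed
      then have dFg: "alg_deg (bf_mult F g) = card (UNIV :: 'n set)" by (simp add: deg_delta0)
      have "\<not> H {}" unfolding HF delta0_def using Fg0 by simp
      obtain x where hx: "H x" using H0 unfolding fun_eq_iff by blast
      with \<open>\<not> H {}\<close> have "x \<noteq> {}" by blast
      then obtain i where "i \<in> x" by blast
      note x = hx this
      define g' where "g' = (\<lambda>y::'n set. i \<in> y \<and> True)"
      have "g' \<in> ANc H" unfolding ANc_def bf_mult_def g'_def fun_eq_iff using x by auto
      moreover have "g' \<noteq> (\<lambda>x. True)" unfolding g'_def by (auto simp: fun_eq_iff)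
      ultimately have "FAI H \<le> alg_deg g' + alg_deg (bf_mult H g')" by (rule FAI_le)
      moreover have "alg_deg g' \<le> 0 + 1" unfolding g'_def
        using deg_xi[of i "\<lambda>x. True"] by (simp add: deg_const_True)
      moreover have "alg_deg (bf_mult H g') \<le> card (UNIV :: 'n set)" by (rule deg_le_n)
      ultimately show ?thesis using gF dFg by simp
    qed
  qed
qed

theorem proposition13:
  fixes f :: "('n::finite) set \<Rightarrow> bool"
  assumes "f \<noteq> delta0" and "alg_compl f \<noteq> delta0"
  shows "\<bar>int (FAI (alg_compl f)) - int (FAI f)\<bar> \<le> 2"
proof -
  let ?h = "alg_compl f"
  have h: "?h = (\<lambda>x. f x \<noteq> delta0 x)" by (rule alg_compl_eq)
  have f2: "f = (\<lambda>x. ?h x \<noteq> delta0 x)" unfolding h by auto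
  have h0: "?h \<noteq> (\<lambda>x. False)"
  proof
    assume "?h = (\<lambda>x. False)"
    then have "f = delta0" unfolding fun_eq_iff using h by (metis (full_types))
    then show False using assms(1) by simp
  qed
  have f0: "f \<noteq> (\<lambda>x. False)"
  proof
    assume "f = (\<lambda>x. False)"
    then have "?h = delta0" unfolding h fun_eq_iff by simp
    then show False using assms(2) by simp
  qed
  have "FAI ?h \<le> FAI f + 2" by (rule main_bound[OF h f0 h0])
  moreover have "FAI f \<le> FAI ?h + 2" by (rule main_bound[OF f2 h0 f0])
  ultimately show ?thesis by linarith
qed

end
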